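(* Let $L>0$, $K>0$, $L_p a>0$, $t_0>0$, $\nu_m>0$, and let $\sigma_1,\sigma_2,p_0,w_0,w_D,q_l$ be real constants. Put $\beta = \frac{L_p a L^2}{K}$. Let $p,u,w$ be twice continuously differentiable functions on $[0,1]$ satisfying $$\frac{1}{t_0}\frac{d}{dx}\Big(\nu_m \frac{dp}{dx}\Big) - \sigma_1\frac{d}{dx}\Big(\nu_m \frac{du}{dx}\Big) - \sigma_2\frac{d}{dx}\Big(\nu_m\frac{dw}{dx}\Big) + q_U - q_l = 0 \quad\text{on } [0,1],$$ where $$q_U(x) = \beta\Big(\frac{1}{t_0}(p_0-p(x)) + \sigma_1 u(x) + \sigma_2 (w(x)-w_0)\Big),$$ together with the boundary conditions $p(0)=1$, $u(0)=1$, $w(0)=w_D$, $p'(1)=u'(1)=w'(1)=0$. Define $$j_U(x) = L\nu_m\Big(-\frac{1}{t_0}p'(x) + \sigma_1 u'(x) + \sigma_2 w'(x)\Big).$$ Then $j_U = \frac{K\nu_m}{L_p a L}\, q_U'$ and, with $$\lambda=\sqrt{\frac{L_p a L^2}{K\nu_m}},\quad q_0 = \beta\Big(\frac{1}{t_0}(p_0-1)+\sigma_1+\sigma_2 (w_D - w_0)\Big),\quad C_1=(q_0-q_l)\frac{e^{2\lambda}}{1+e^{2\lambda}},\quad C_2=(q_0-q_l)\frac{1}{1+e^{2\lambda}},$$ one has for all $x\in[0,1]$ $$q_U(x) = C_1 e^{-\lambda x} + C_2 e^{\lambda x} + q_l,\qquad j_U(x) = \frac{L}{\lambda}\big(-C_1e^{-\lambda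 x}+C_2 e^{\lambda x}\big).$$
   Context: This is the steady-state fluid balance equation of a non-dimensionalised model of fluid, glucose and albumin transport in peritoneal dialysis, under the assumptions that the reflection coefficients in tissue and capillary wall coincide ($S_G=S_{TG}$, $S_A=S_{TA}$) and that the fractional void volume $\nu$ equals the constant $\nu_m$. Here $x\in[0,1]$ is the non-dimensional distance from the peritoneal surface, $p$ the non-dimensional hydrostatic pressure, $u$ and $w$ non-dimensional glucose and albumin concentrations, $q_U$ the density of fluid flux from blood to tissue, $j_U$ the fluid flux across the tissue, $q_l$ the lymphatic flux density; $w_D$ is the non-dimensional albumin concentration in dialysate and $w_0$ that in blood. *)

theory Defs
  imports "HOL-Analysis.Analysis"
begin

definition C2_on_unit :: "(real \<Rightarrow> real) \<Rightarrow> (real \<Rightarrow> real) \<Rightarrow> (real \<Rightarrow> real) \<Rightarrow> bool" where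
  "C2_on_unit f f1 f2 \<longleftrightarrow>
     (\<forall>x\<in>{0..1}. (f has_real_derivative f1 x) (at x within {0..1})) \<and>
     (\<forall>x\<in>{0..1}. (f1 has_real_derivative f2 x) (at x within {0..1})) \<and>
     continuous_on {0..1} f2"

end

theory Submission
  imports Defs
begin

lemma ode_sol:
  fixes q dq ddq :: "real \<Rightarrow> real" and lam ql q0 :: real
  assumes lam: "lam > 0"
    and d1: "\<forall>x\<in>{0..1}. (q has_real_derivative dq x) (at x within {0..1})"
    and d2: "\<forall>x\<in>{0..1}. (dq has_real_derivative ddq x) (at x within {0..1})"
    and eq: "\<forall>x\<in>{0..1}. ddq x = lam^2 * (q x - ql)"
    and b0: "q 0 = q0" and b1: "dq 1 = 0"
  shows "\<forall>x\<in>{0..1}. q x = (q0 - ql) * exp (2*lam) / (1 + exp (2*lam)) * exp (-lam*x)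
            + (q0 - ql) * 1 / (1 + exp (2*lam)) * exp (lam*x) + ql
       \<and> dq x = lam * (-((q0 - ql) * exp (2*lam) / (1 + exp (2*lam))) * exp (-lam*x)
            + (q0 - ql) * 1 / (1 + exp (2*lam)) * exp (lam*x))"
proof -
  have "\<exists>A. \<forall>x\<in>{0..1}. (dq x + lam*(q x - ql)) * exp(-lam*x) = A"
  proof (rule has_field_derivative_zero_constant)
    fix x :: real assume x: "x \<in> {0..1}"
    have "((\<lambda>x. (dq x + lam*(q x - ql)) * exp(-lam*x)) has_real_derivative
       ((ddq x + lam*dq x) * exp(-lam*x) + (dq x + lam*(q x - ql)) * (exp(-lam*x) * (-lam))))
       (at x within {0..1})"
      using d1 d2 x by (auto intro!: derivative_eq_intros)
    moreover have "(ddq x + lam*dq x) * exp(-lam*x) + (dq x + lam*(q x - ql)) * (exp(-lam*x) * (-lam)) = 0"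
      proof -
      have e: "ddq x = lam*lam*(q x - ql)" using eq x by (simp add: power2_eq_square)
      show ?thesis unfolding e by algebra
    qed
    ultimately show "((\<lambda>x. (dq x + lam*(q x - ql)) * exp(-lam*x)) has_real_derivative 0) (at x within {0..1})" by simp
  qed simp
  then obtain A where A: "\<forall>x\<in>{0..1}. (dq x + lam*(q x - ql)) * exp(-lam*x) = A" by blast
  have "\<exists>B. \<forall>x\<in>{0..1}. (dq x - lam*(q x - ql)) * exp(lam*x) = B"
  proof (rule has_field_derivative_zero_constant)
    fix x :: real assume x: "x \<in> {0..1}"
    have "((\<lambda>x. (dq x - lam*(q x - ql)) * exp(lam*x)) has_real_derivative
       ((ddq x - lam*dq x) * exp(lam*x) + (dq x - lam*(q x - ql)) * (exp(lam*x) * lam)))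
       (at x within {0..1})"
      using d1 d2 x by (auto intro!: derivative_eq_intros)
    moreover have "(ddq x - lam*dq x) * exp(lam*x) + (dq x - lam*(q x - ql)) * (exp(lam*x) * lam) = 0"
      proof -
      have e: "ddq x = lam*lam*(q x - ql)" using eq x by (simp add: power2_eq_square)
      show ?thesis unfolding e by algebra
    qed
    ultimately show "((\<lambda>x. (dq x - lam*(q x - ql)) * exp(lam*x)) has_real_derivative 0) (at x within {0..1})" by simp
  qed simp
  then obtain B where B: "\<forall>x\<in>{0..1}. (dq x - lam*(q x - ql)) * exp(lam*x) = B" by blast
  have qf: "q x - ql = (A * exp(lam*x) - B * exp(-lam*x)) / (2*lam)"
    and dqf: "dq x = (A * exp(lam*x) + B * exp(-lam*x)) / 2" if x: "x \<in> {0..1}" for x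
  proof -
    have ee: "exp(-lam*x)*exp(lam*x) = 1" by (simp add: exp_add[symmetric])
    have 1: "dq x + lam*(q x - ql) = A * exp(lam*x)"
    proof -
      have "A*exp(lam*x) = (dq x + lam*(q x - ql)) * (exp(-lam*x)*exp(lam*x))"
        using A x by (simp only: mult.assoc[symmetric])
      thus ?thesis unfolding ee by simp
    qed
    have 2: "dq x - lam*(q x - ql) = B * exp(-lam*x)"
    proof -
      have "B*exp(-lam*x) = (dq x - lam*(q x - ql)) * (exp(lam*x)*exp(-lam*x))"
        using B x by (simp only: mult.assoc[symmetric])
      thus ?thesis using ee by (simp add: mult.commute)
    qed
    have 3: "2*lam*(q x - ql) = A * exp(lam*x) - B * exp(-lam*x)" using 1 2 by algebra
    show "q x - ql = (A * exp(lam*x) - B * exp(-lam*x)) / (2*lam)"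
      using 3 lam by (simp add: eq_divide_eq mult.commute)
    have 4: "2*dq x = A * exp(lam*x) + B * exp(-lam*x)" using 1 2 by algebra
    show "dq x = (A * exp(lam*x) + B * exp(-lam*x)) / 2" using 4 by simp
  qed
  have e0: "A - B = 2*lam*(q0 - ql)"
  proof -
    have "q0 - ql = (A - B) / (2*lam)" using qf[of 0] b0 by simp
    thus ?thesis using lam by (simp add: field_simps)
  qed
  have e1: "A * exp lam + B * exp (-lam) = 0" using dqf[of 1] b1 by simp
  have B': "B = - A * exp(2*lam)"
  proof -
    have "B * (exp(-lam) * exp lam) = - A * (exp lam * exp lam)" using e1 by algebra
    moreover have "exp(-lam) * exp lam = 1" by (simp add: exp_add[symmetric])
    moreover have "exp lam * exp lam = exp(2*lam)" by (simp add: exp_add[symmetric])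
    ultimately show ?thesis by simp
  qed
  have pos: "1 + exp(2*lam) > 0" by (simp add: add_pos_pos)
  have Aeq: "A * (1 + exp(2*lam)) = 2*lam*(q0-ql)"
    using e0 B' by algebra
  show ?thesis
  proof
    fix x :: real assume x: "x \<in> {0..1}"
    define E where "E = exp(2*lam)"
    define P where "P = exp(lam*x)"
    define M where "M = exp(-lam*x)"
    have Ep: "1 + E > 0" using pos E_def by simp
    define c1 where "c1 = (q0 - ql) * E / (1 + E)"
    define c2 where "c2 = (q0 - ql) * 1 / (1 + E)"
    have AE: "A = 2*lam*c2" using Aeq Ep unfolding E_def c2_def by (simp add: eq_divide_eq)
    have BE: "B = - 2*lam*c1" using B' AE Ep unfolding E_def c1_def c2_def by simp
    have l0: "lam \<noteq> 0" using lam by simp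
    have "q x = c1 * M + c2 * P + ql"
    proof -
      have "q x - ql = (A * P - B * M) / (2*lam)" using qf[OF x] P_def M_def by simp
      also have "... = (2*lam*(c2 * P + c1 * M)) / (2*lam)" unfolding AE BE by algebra
      also have "... = c2 * P + c1 * M" using l0 by simp
      finally show ?thesis by simp
    qed
    moreover have "dq x = lam * (- c1 * M + c2 * P)"
    proof -
      have "dq x = (A * P + B * M) / 2" using dqf[OF x] P_def M_def by simp
      also have "... = lam * (- c1 * M + c2 * P)"
        unfolding AE BE by simp algebra
      finally show ?thesis .
    qed
    ultimately show "q x = (q0 - ql) * exp (2*lam) / (1 + exp (2*lam)) * exp (-lam*x)
            + (q0 - ql) * 1 / (1 + exp (2*lam)) * exp (lam*x) + ql
       \<and> dq x = lam * (-((q0 - ql) * exp (2*lam) / (1 + exp (2*lam))) * exp (-lam*x)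
            + (q0 - ql) * 1 / (1 + exp (2*lam)) * exp (lam*x))" unfolding E_def P_def M_def c1_def c2_def by simp
  qed

qed


theorem mainTheorem2:
  fixes L K Lpa t0 \<nu>m \<sigma>1 \<sigma>2 p0 w0 wD ql :: real
    and p p' p'' u u' u'' w w' w'' :: "real \<Rightarrow> real"
  assumes hL: "L > 0" and hK: "K > 0" and hLpa: "Lpa > 0" and ht0: "t0 > 0" and h\<nu>: "\<nu>m > 0"
    and hp: "C2_on_unit p p' p''" and hu: "C2_on_unit u u' u''" and hw: "C2_on_unit w w' w''"
    and ode: "\<forall>x\<in>{0..1}.
        (1/t0) * (\<nu>m * p'' x) - \<sigma>1 * (\<nu>m * u'' x) - \<sigma>2 * (\<nu>m * w'' x)
        + (Lpa * L^2 / K) * ((1/t0) * (p0 - p x) + \<sigma>1 * u x + \<sigma>2 * (w x - w0)) - ql = 0"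
    and bc0: "p 0 = 1" "u 0 = 1" "w 0 = wD"
    and bc1: "p' 1 = 0" "u' 1 = 0" "w' 1 = 0"
  shows "let \<beta> = Lpa * L^2 / K;
             qU = (\<lambda>x. \<beta> * ((1/t0) * (p0 - p x) + \<sigma>1 * u x + \<sigma>2 * (w x - w0)));
             jU = (\<lambda>x. L * \<nu>m * (-(1/t0) * p' x + \<sigma>1 * u' x + \<sigma>2 * w' x));
             lam = sqrt (Lpa * L^2 / (K * \<nu>m));
             q0 = \<beta> * ((1/t0) * (p0 - 1) + \<sigma>1 + \<sigma>2 * (wD - w0));
             C1 = (q0 - ql) * exp (2*lam) / (1 + exp (2*lam));
             C2 = (q0 - ql) * 1 / (1 + exp (2*lam))
         in (\<forall>x\<in>{0..1}. \<exists>D. (qU has_real_derivative D) (at x within {0..1})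
                              \<and> jU x = (K * \<nu>m / (Lpa * L)) * D)
          \<and> (\<forall>x\<in>{0..1}. qU x = C1 * exp (-lam*x) + C2 * exp (lam*x) + ql
                       \<and> jU x = (L/lam) * (-C1 * exp (-lam*x) + C2 * exp (lam*x)))"
proof -
  define \<beta> where "\<beta> = Lpa * L^2 / K"
  define qU where "qU = (\<lambda>x. \<beta> * ((1/t0) * (p0 - p x) + \<sigma>1 * u x + \<sigma>2 * (w x - w0)))"
  define jU where "jU = (\<lambda>x. L * \<nu>m * (-(1/t0) * p' x + \<sigma>1 * u' x + \<sigma>2 * w' x))"
  define lam where "lam = sqrt (Lpa * L^2 / (K * \<nu>m))"
  define q0 where "q0 = \<beta> * ((1/t0) * (p0 - 1) + \<sigma>1 + \<sigma>2 * (wD - w0))"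
  define dq where "dq = (\<lambda>x. \<beta> * (-(1/t0) * p' x + \<sigma>1 * u' x + \<sigma>2 * w' x))"
  define ddq where "ddq = (\<lambda>x. \<beta> * (-(1/t0) * p'' x + \<sigma>1 * u'' x + \<sigma>2 * w'' x))"
  have bpos: "\<beta> > 0" unfolding \<beta>_def using hL hK hLpa by simp
  have lpos: "lam > 0" unfolding lam_def using hL hK hLpa h\<nu> by simp
  have lsq: "lam^2 = \<beta> / \<nu>m" unfolding lam_def \<beta>_def using hL hK hLpa h\<nu>
    by (simp add: field_simps)
  have d1: "\<forall>x\<in>{0..1}. (qU has_real_derivative dq x) (at x within {0..1})"
  proof
    fix x :: real assume x: "x \<in> {0..1}"
    have a: "(p has_real_derivative p' x) (at x within {0..1})"
      "(u has_real_derivative u' x) (at x within {0..1})"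
      "(w has_real_derivative w' x) (at x within {0..1})"
      using hp hu hw x unfolding C2_on_unit_def by auto
    show "(qU has_real_derivative dq x) (at x within {0..1})"
      unfolding qU_def dq_def
      by (rule derivative_eq_intros a refl | simp add: algebra_simps)+
  qed
  have d2: "\<forall>x\<in>{0..1}. (dq has_real_derivative ddq x) (at x within {0..1})"
  proof
    fix x :: real assume x: "x \<in> {0..1}"
    have a: "(p' has_real_derivative p'' x) (at x within {0..1})"
      "(u' has_real_derivative u'' x) (at x within {0..1})"
      "(w' has_real_derivative w'' x) (at x within {0..1})"
      using hp hu hw x unfolding C2_on_unit_def by auto
    show "(dq has_real_derivative ddq x) (at x within {0..1})"
      unfolding ddq_def dq_def
      by (rule derivative_eq_intros a refl | simp add: algebra_simps)+
  qed
  have eq: "\<forall>x\<in>{0..1}. ddq x = lam^2 * (qU x - ql)"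
  proof
    fix x :: real assume x: "x \<in> {0..1}"
    have o: "- (\<nu>m / \<beta>) * ddq x + (qU x - ql) = 0"
    proof -
      have z: "(1/t0) * (\<nu>m * p'' x) - \<sigma>1 * (\<nu>m * u'' x) - \<sigma>2 * (\<nu>m * w'' x)
        + \<beta> * ((1/t0) * (p0 - p x) + \<sigma>1 * u x + \<sigma>2 * (w x - w0)) - ql = 0"
        using ode x unfolding \<beta>_def by blast
      have "- (\<nu>m / \<beta>) * ddq x + (qU x - ql) = (1/t0) * (\<nu>m * p'' x) - \<sigma>1 * (\<nu>m * u'' x) - \<sigma>2 * (\<nu>m * w'' x)
        + \<beta> * ((1/t0) * (p0 - p x) + \<sigma>1 * u x + \<sigma>2 * (w x - w0)) - ql"
        unfolding ddq_def qU_def using bpos by (simp add: field_simps)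
      with z show ?thesis by simp
    qed
    show "ddq x = lam^2 * (qU x - ql)" unfolding lsq using o bpos h\<nu>
      by (simp add: field_simps)
  qed
  have b0: "qU 0 = q0" unfolding qU_def q0_def using bc0 by simp
  have b1: "dq 1 = 0" unfolding dq_def using bc1 by simp
  note sol = ode_sol[OF lpos d1 d2 eq b0 b1]
  have jd: "jU x = (K * \<nu>m / (Lpa * L)) * dq x" for x
    unfolding jU_def dq_def \<beta>_def using hL hK hLpa
    by (simp add: field_simps power2_eq_square)
  have kl: "(K * \<nu>m / (Lpa * L)) * lam = L / lam"
  proof -
    have "(K * \<nu>m / (Lpa * L)) * lam^2 = L" unfolding lsq \<beta>_def using hL hK hLpa h\<nu>
      by (simp add: field_simps power2_eq_square)
    thus ?thesis using lpos by (simp add: field_simps power2_eq_square)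
  qed
  have main: "(\<forall>x\<in>{0..1}. \<exists>D. (qU has_real_derivative D) (at x within {0..1})
                              \<and> jU x = (K * \<nu>m / (Lpa * L)) * D)
          \<and> (\<forall>x\<in>{0..1}. qU x = (q0 - ql) * exp (2*lam) / (1 + exp (2*lam)) * exp (-lam*x) + (q0 - ql) * 1 / (1 + exp (2*lam)) * exp (lam*x) + ql
                       \<and> jU x = (L/lam) * (-((q0 - ql) * exp (2*lam) / (1 + exp (2*lam))) * exp (-lam*x) + (q0 - ql) * 1 / (1 + exp (2*lam)) * exp (lam*x)))"
  proof (intro conjI ballI)
    fix x :: real assume x: "x \<in> {0..1}"
    show "\<exists>D. (qU has_real_derivative D) (at x within {0..1}) \<and> jU x = (K * \<nu>m / (Lpa * L)) * D"
      using d1 x jd by blast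
    show "qU x = (q0 - ql) * exp (2*lam) / (1 + exp (2*lam)) * exp (-lam*x) + (q0 - ql) * 1 / (1 + exp (2*lam)) * exp (lam*x) + ql"
      using sol x by blast
    show "jU x = (L/lam) * (-((q0 - ql) * exp (2*lam) / (1 + exp (2*lam))) * exp (-lam*x) + (q0 - ql) * 1 / (1 + exp (2*lam)) * exp (lam*x))"
    proof -
      define S where "S = (-((q0 - ql) * exp (2*lam) / (1 + exp (2*lam))) * exp (-lam*x) + (q0 - ql) * 1 / (1 + exp (2*lam)) * exp (lam*x))"
      have "dq x = lam * S" using sol x unfolding S_def by blast
      hence "jU x = ((K * \<nu>m / (Lpa * L)) * lam) * S" using jd by (simp only: mult.assoc)
      thus ?thesis unfolding kl S_def .
    qed
  qed
  show ?thesis unfolding Let_def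
    using main unfolding qU_def jU_def \<beta>_def lam_def q0_def .
qed

end
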